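(* Let $\mathbb{A},\mathbb{B}$ be real square matrices of the same size such that $\mathbb{A}$ is symmetric positive definite and $\mathbb{A}\mathbb{B}$ is skew-symmetric. Then every eigenvalue of $\mathbb{A}+\mathbb{B}$ is either a positive real number or a non-real complex number with positive real part. In particular, $\mathbb{A}+\mathbb{B}$ is invertible. *)

theory Defs
  imports "HOL-Analysis.Analysis"
begin

definition sym_pos_def_matrix :: "real^'n^'n \<Rightarrow> bool" where
  "sym_pos_def_matrix A \<longleftrightarrow> transpose A = A \<and> (\<forall>x. x \<noteq> 0 \<longrightarrow> x \<bullet> (A *v x) > 0)"

definition skew_symmetric_matrix :: "real^'n^'n \<Rightarrow> bool" where
  "skew_symmetric_matrix M \<longleftrightarrow> transpose M = - M"

definition complexify :: "real^'n^'m \<Rightarrow> complex^'n^'m" where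
  "complexify A = (\<chi> i j. complex_of_real (A $ i $ j))"

definition matrix_eigenvalue :: "real^'n^'n \<Rightarrow> complex \<Rightarrow> bool" where
  "matrix_eigenvalue A z \<longleftrightarrow> (\<exists>v::complex^'n. v \<noteq> 0 \<and> complexify A *v v = z *s v)"

end

theory Submission
  imports Defs
begin

lemma dot_mv: fixes M :: "real^'n^'n"
  shows "x \<bullet> (M *v y) = (transpose M *v x) \<bullet> y"
proof -
  have "x \<bullet> (M *v y) = (\<Sum>i\<in>UNIV. \<Sum>j\<in>UNIV. x $ i * M $ i $ j * y $ j)"
    unfolding inner_vec_def matrix_vector_mult_def by (simp add: sum_distrib_left mult.assoc)
  also have "\<dots> = (\<Sum>j\<in>UNIV. \<Sum>i\<in>UNIV. x $ i * M $ i $ j * y $ j)"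
    by (rule sum.swap)
  also have "\<dots> = (transpose M *v x) \<bullet> y"
    unfolding inner_vec_def matrix_vector_mult_def transpose_def
    by (simp add: sum_distrib_left mult_ac)
  finally show ?thesis .
qed

lemma skew_zero: fixes M :: "real^'n^'n"
  assumes "transpose M = - M" shows "x \<bullet> (M *v x) = 0"
proof -
  have "x \<bullet> (M *v x) = (transpose M *v x) \<bullet> x" by (rule dot_mv)
  also have "\<dots> = - (x \<bullet> (M *v x))" using assms
    by (simp add: inner_commute matrix_vector_mult_def inner_vec_def sum_negf)
  finally show ?thesis by simp
qed

lemma key:
  fixes A B :: "real^'n^'n" and x y :: "real^'n" and a b :: real
  assumes A: "sym_pos_def_matrix A" and S: "skew_symmetric_matrix (A ** B)"
    and hx: "(A + B) *v x = a *\<^sub>R x - b *\<^sub>R y"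
    and hy: "(A + B) *v y = b *\<^sub>R x + a *\<^sub>R y"
    and nz: "x \<noteq> 0 \<or> y \<noteq> 0"
  shows "a > 0"
proof -
  have At: "transpose A = A" and pd: "\<And>x. x \<noteq> 0 \<Longrightarrow> x \<bullet> (A *v x) > 0"
    using A unfolding sym_pos_def_matrix_def by auto
  have sk: "transpose (A ** B) = - (A ** B)" using S unfolding skew_symmetric_matrix_def .
  have e: "x \<bullet> (A *v ((A + B) *v x)) = (A *v x) \<bullet> (A *v x)" for x
  proof -
    have "A *v ((A + B) *v x) = A *v (A *v x) + (A ** B) *v x"
      by (simp add: matrix_add_ldistrib matrix_vector_mul_assoc[symmetric] matrix_vector_mult_add_rdistrib matrix_vector_right_distrib)
    then have "x \<bullet> (A *v ((A + B) *v x)) = x \<bullet> (A *v (A *v x)) + x \<bullet> ((A ** B) *v x)"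
      by (simp add: inner_add_right)
    also have "x \<bullet> ((A ** B) *v x) = 0" using skew_zero[OF sk] .
    also have "x \<bullet> (A *v (A *v x)) = (A *v x) \<bullet> (A *v x)" using dot_mv[of x A "A *v x"] At by simp
    finally show ?thesis by simp
  qed
  have xy: "x \<bullet> (A *v y) = y \<bullet> (A *v x)"
    using dot_mv[of x A y] At by (simp add: inner_commute)
  have "x \<bullet> (A *v ((A + B) *v x)) + y \<bullet> (A *v ((A + B) *v y))
        = a * (x \<bullet> (A *v x) + y \<bullet> (A *v y))"
    unfolding hx hy
    by (simp add: matrix_vector_mult_diff_distrib matrix_vector_right_distrib matrix_vector_mult_scaleR
          inner_diff_right inner_add_right xy algebra_simps)
  then have eq: "(A *v x) \<bullet> (A *v x) + (A *v y) \<bullet> (A *v y) = a * (x \<bullet> (A *v x) + y \<bullet> (A *v y))"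
    by (simp add: e)
  have g0: "x \<bullet> (A *v x) \<ge> 0" for x using pd[of x] by (cases "x = 0") auto
  have pos: "x \<bullet> (A *v x) + y \<bullet> (A *v y) > 0"
    using nz pd[of x] pd[of y] g0[of x] g0[of y] by auto
  have Anz: "v \<noteq> 0 \<Longrightarrow> A *v v \<noteq> 0" for v using pd[of v] by auto
  have lhs: "(A *v x) \<bullet> (A *v x) + (A *v y) \<bullet> (A *v y) > 0"
  proof (cases "x = 0")
    case True
    then have "A *v y \<noteq> 0" using nz Anz by blast
    then show ?thesis by (simp add: add_nonneg_pos)
  next
    case False
    then have "A *v x \<noteq> 0" using Anz by blast
    then show ?thesis by (simp add: add_pos_nonneg)
  qed
  have "0 < a * (x \<bullet> (A *v x) + y \<bullet> (A *v y))" using eq lhs by simp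
  then show ?thesis using pos by (simp add: zero_less_mult_iff)
qed

theorem lemma4p1:
  fixes A B :: "real^'n^'n"
  assumes "sym_pos_def_matrix A"
    and "skew_symmetric_matrix (A ** B)"
  shows "(\<forall>z::complex. matrix_eigenvalue (A + B) z \<longrightarrow>
            ((Im z = 0 \<and> Re z > 0) \<or> (Im z \<noteq> 0 \<and> Re z > 0)))
         \<and> invertible (A + B)"
proof
  show "\<forall>z::complex. matrix_eigenvalue (A + B) z \<longrightarrow>
            ((Im z = 0 \<and> Re z > 0) \<or> (Im z \<noteq> 0 \<and> Re z > 0))"
  proof (intro allI impI)
    fix z assume "matrix_eigenvalue (A + B) z"
    then obtain v :: "complex^'n" where v0: "v \<noteq> 0" and ev: "complexify (A + B) *v v = z *s v"
      unfolding matrix_eigenvalue_def by auto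
    define x where "x = (\<chi> i. Re (v $ i))"
    define y where "y = (\<chi> i. Im (v $ i))"
    have comp: "(complexify (A + B) *v v) $ i = Complex (((A + B) *v x) $ i) (((A + B) *v y) $ i)" for i
      unfolding complexify_def matrix_vector_mult_def x_def y_def
      by (simp add: complex_eq_iff Re_sum Im_sum)
    have hx: "(A + B) *v x = Re z *\<^sub>R x - Im z *\<^sub>R y"
    proof (rule vec_eq_iff[THEN iffD2], rule allI)
      fix i
      have "Re ((complexify (A + B) *v v) $ i) = Re ((z *s v) $ i)" using ev by simp
      then show "((A + B) *v x) $ i = (Re z *\<^sub>R x - Im z *\<^sub>R y) $ i"
        using comp[of i] by (simp add: x_def y_def)
    qed
    have hy: "(A + B) *v y = Im z *\<^sub>R x + Re z *\<^sub>R y"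
    proof (rule vec_eq_iff[THEN iffD2], rule allI)
      fix i
      have "Im ((complexify (A + B) *v v) $ i) = Im ((z *s v) $ i)" using ev by simp
      then show "((A + B) *v y) $ i = (Im z *\<^sub>R x + Re z *\<^sub>R y) $ i"
        using comp[of i] by (simp add: x_def y_def)
    qed
    have nz: "x \<noteq> 0 \<or> y \<noteq> 0"
    proof (rule ccontr)
      assume "\<not> (x \<noteq> 0 \<or> y \<noteq> 0)"
      then have "v $ i = 0" for i
        by (metis complex_eqI zero_complex.sel(1) zero_complex.sel(2) vec_lambda_beta x_def y_def zero_index)
      then show False using v0 by (simp add: vec_eq_iff)
    qed
    have "Re z > 0" using key[OF assms hx hy nz] .
    then show "(Im z = 0 \<and> Re z > 0) \<or> (Im z \<noteq> 0 \<and> Re z > 0)" by auto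
  qed
next
  show "invertible (A + B)"
    unfolding invertible_left_inverse matrix_left_invertible_ker
  proof (intro allI impI)
    fix x assume h: "(A + B) *v x = 0"
    show "x = 0"
    proof (rule ccontr)
      assume "x \<noteq> 0"
      have "(A + B) *v x = 0 *\<^sub>R x - 0 *\<^sub>R (0::real^'n)" using h by simp
      moreover have "(A + B) *v 0 = 0 *\<^sub>R x + 0 *\<^sub>R (0::real^'n)" by simp
      ultimately have "(0::real) > 0" using key[OF assms] \<open>x \<noteq> 0\<close> by blast
      then show False by simp
    qed
  qed
qed

end
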